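(* Let $G=(V,D)$ be a simple directed graph that is not complete, and let $J=J(\psi_G)$. Then for every node $i\in V$ there exists a set $S$ of $|D|+1$ columns of $J$ such that $S$ contains no column $K_{ij}$ with $j\in V$ (including $K_{ii}$), and $\mathrm{rank}(J_S)\ge|D|-|\mathrm{ch}(i)|+1$.
   Context: A directed graph $G=(V,D)$ has edge set $D\subseteq V\times V$ of ordered pairs $(i,j)$, $i\neq j$. It is simple if $(i,j)$ and $(j,i)$ are never both in $D$. It is complete if every pair of distinct nodes is adjacent. $\mathrm{ch}(i)$ is the set of children of $i$. $\Lambda$ is the $V\times V$ matrix with indeterminate entries $\lambda_{ij}$ for $(i,j)\in D$ and zeros elsewhere, and $s$ is a further indeterminate. Let $\psi_G(\Lambda,s)=s(I-\Lambda)(I-\Lambda)^T=K$. The transposed Jacobian $J(\psi_G)$ has rows indexed by $\{\lambda_{kl}:(k,l)\in D\}\cup\{s\}$ and columns indexed by $K_{ij}$ (with $K_{ij}=K_{ji}$), with entries $\partial K_{ij}/\partial\theta$. $J_S$ is the submatrix on the columns in $S$, and rank means rank over $\mathbb{R}(\lambda,s)$. *)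

theory Defs
  imports "HOL-Library.Poly_Mapping" "HOL-Library.Option_ord" "HOL-Library.Product_Lexorder"
    "HOL-Computational_Algebra.Fraction_Field" "Jordan_Normal_Form.DL_Rank"
begin

type_synonym 'x rpoly = "('x \<Rightarrow>\<^sub>0 nat) \<Rightarrow>\<^sub>0 real"

definition pvar :: "'x \<Rightarrow> 'x rpoly" where
  "pvar x = Poly_Mapping.single (Poly_Mapping.single x 1) 1"

definition pconst :: "real \<Rightarrow> 'x rpoly" where
  "pconst c = Poly_Mapping.single 0 c"

definition pdiff :: "'x \<Rightarrow> 'x rpoly \<Rightarrow> 'x rpoly" where
  "pdiff x p = (\<Sum>(m :: 'x \<Rightarrow>\<^sub>0 nat)\<in>Poly_Mapping.keys p.
      Poly_Mapping.single (m - Poly_Mapping.single x 1) (real (Poly_Mapping.lookup m x) * Poly_Mapping.lookup p m))"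

(* Indeterminates of the parametrization: Some (k,l) is lambda_kl, None is s *)
type_synonym 'v param = "('v \<times> 'v) option"

definition simple_digraph :: "'v set \<Rightarrow> ('v \<times> 'v) set \<Rightarrow> bool" where
  "simple_digraph V D \<longleftrightarrow> finite V \<and> D \<subseteq> V \<times> V \<and> (\<forall>i. (i, i) \<notin> D)
      \<and> (\<forall>i j. (i, j) \<in> D \<longrightarrow> (j, i) \<notin> D)"

definition complete_digraph :: "'v set \<Rightarrow> ('v \<times> 'v) set \<Rightarrow> bool" where
  "complete_digraph V D \<longleftrightarrow> (\<forall>i\<in>V. \<forall>j\<in>V. i \<noteq> j \<longrightarrow> (i, j) \<in> D \<or> (j, i) \<in> D)"

definition children :: "('v \<times> 'v) set \<Rightarrow> 'v \<Rightarrow> 'v set" where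
  "children D i = {j. (i, j) \<in> D}"

definition Lam :: "('v \<times> 'v) set \<Rightarrow> 'v \<Rightarrow> 'v \<Rightarrow> 'v param rpoly" where
  "Lam D i j = (if (i, j) \<in> D then pvar (Some (i, j)) else 0)"

definition IminusLam :: "('v \<times> 'v) set \<Rightarrow> 'v \<Rightarrow> 'v \<Rightarrow> 'v param rpoly" where
  "IminusLam D i j = (if i = j then 1 else 0) - Lam D i j"

(* entries of K = psi_G(Lambda, s) = s (I - Lambda)(I - Lambda)^T *)
definition Kmat :: "'v set \<Rightarrow> ('v \<times> 'v) set \<Rightarrow> 'v \<Rightarrow> 'v \<Rightarrow> 'v param rpoly" where
  "Kmat V D i j = pvar None * (\<Sum>k\<in>V. IminusLam D i k * IminusLam D j k)"

(* row index set of the transposed Jacobian: {lambda_kl : (k,l) in D} \<union> {s} *)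
definition params :: "('v \<times> 'v) set \<Rightarrow> 'v param set" where
  "params D = Some ` D \<union> {None}"

(* column index set: entries K_ij of the symmetric matrix K, K_ij = K_ji,
   represented by pairs (i,j) with i \<le> j (including the diagonal) *)
definition Kcols :: "('v::linorder) set \<Rightarrow> ('v \<times> 'v) set" where
  "Kcols V = {(i, j). i \<in> V \<and> j \<in> V \<and> i \<le> j}"

(* Rows and columns are enumerated in increasing order (irrelevant for the rank). *)
definition JS :: "('v::linorder) set \<Rightarrow> ('v \<times> 'v) set \<Rightarrow> ('v \<times> 'v) set
                   \<Rightarrow> 'v param rpoly fract mat" where
  "JS V D S = (let rs = sorted_list_of_set (params D); cs = sorted_list_of_set S in
     mat (length rs) (length cs)
       (\<lambda>(a, b). Fract (pdiff (rs ! a) (Kmat V D (fst (cs ! b)) (snd (cs ! b)))) 1))"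

definition rankJS :: "('v::linorder) set \<Rightarrow> ('v \<times> 'v) set \<Rightarrow> ('v \<times> 'v) set \<Rightarrow> nat" where
  "rankJS V D S = vec_space.rank (card (params D)) (JS V D S)"

end

theory Submission
  imports Defs "Jordan_Normal_Form.DL_Rank_Submatrix"
begin

definition Lf :: "(('x \<Rightarrow>\<^sub>0 nat) \<Rightarrow> real) \<Rightarrow> 'x rpoly \<Rightarrow> real" where
  "Lf \<phi> p = (\<Sum>m\<in>Poly_Mapping.keys p. Poly_Mapping.lookup p m * \<phi> m)"

lemma Lf_superset:
  assumes "finite A" "Poly_Mapping.keys p \<subseteq> A"
  shows "Lf \<phi> p = (\<Sum>m\<in>A. Poly_Mapping.lookup p m * \<phi> m)"
  unfolding Lf_def
  by (rule sum.mono_neutral_left) (use assms in \<open>auto simp: in_keys_iff\<close>)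

lemma Lf_add: "Lf \<phi> (p + q) = Lf \<phi> p + Lf \<phi> q"
proof -
  let ?A = "Poly_Mapping.keys p \<union> Poly_Mapping.keys q"
  have "Lf \<phi> (p + q) = (\<Sum>m\<in>?A. Poly_Mapping.lookup (p + q) m * \<phi> m)"
    using keys_add[of p q] by (intro Lf_superset) auto
  also have "\<dots> = (\<Sum>m\<in>?A. Poly_Mapping.lookup p m * \<phi> m) + (\<Sum>m\<in>?A. Poly_Mapping.lookup q m * \<phi> m)"
    by (simp add: lookup_add distrib_right sum.distrib)
  also have "\<dots> = Lf \<phi> p + Lf \<phi> q"
    by (subst (1 2) Lf_superset[of ?A]) auto
  finally show ?thesis .
qed

lemma Lf_zero[simp]: "Lf \<phi> 0 = 0"
  by (simp add: Lf_def)

lemma Lf_uminus: "Lf \<phi> (- p) = - Lf \<phi> p"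
proof -
  have "Poly_Mapping.keys (-p) = Poly_Mapping.keys p" by (auto simp: in_keys_iff)
  then show ?thesis by (simp add: Lf_def sum_negf)
qed

lemma Lf_diff: "Lf \<phi> (p - q) = Lf \<phi> p - Lf \<phi> q"
  using Lf_add[of \<phi> p "-q"] Lf_uminus[of \<phi> q] by simp

lemma Lf_sum: "Lf \<phi> (\<Sum>i\<in>I. g i) = (\<Sum>i\<in>I. Lf \<phi> (g i))"
  by (induction I rule: infinite_finite_induct) (auto simp: Lf_add)

lemma Lf_single: "Lf \<phi> (Poly_Mapping.single m c) = c * \<phi> m"
  by (simp add: Lf_def)

lemma poly_expand: "p = (\<Sum>a\<in>Poly_Mapping.keys p. Poly_Mapping.single a (Poly_Mapping.lookup p a))"
proof (rule poly_mapping_eqI)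
  fix k
  have "(\<Sum>a\<in>Poly_Mapping.keys p. Poly_Mapping.lookup (Poly_Mapping.single a (Poly_Mapping.lookup p a)) k)
     = Poly_Mapping.lookup p k"
    by (simp add: lookup_single when_def in_keys_iff)
  then show "Poly_Mapping.lookup p k = Poly_Mapping.lookup (\<Sum>a\<in>Poly_Mapping.keys p. Poly_Mapping.single a (Poly_Mapping.lookup p a)) k"
    by (simp add: lookup_sum)
qed

lemma Lf_mult: "Lf \<phi> (p * q) = (\<Sum>a\<in>Poly_Mapping.keys p. \<Sum>b\<in>Poly_Mapping.keys q.
    Poly_Mapping.lookup p a * Poly_Mapping.lookup q b * \<phi> (a + b))"
proof -
  have "p * q = (\<Sum>a\<in>Poly_Mapping.keys p. Poly_Mapping.single a (Poly_Mapping.lookup p a)) *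
     (\<Sum>b\<in>Poly_Mapping.keys q. Poly_Mapping.single b (Poly_Mapping.lookup q b))"
    using poly_expand[of p] poly_expand[of q] by simp
  also have "\<dots> = (\<Sum>a\<in>Poly_Mapping.keys p. \<Sum>b\<in>Poly_Mapping.keys q.
      Poly_Mapping.single (a + b) (Poly_Mapping.lookup p a * Poly_Mapping.lookup q b))"
    unfolding sum_distrib_left sum_distrib_right mult_single by (rule sum.swap)
  finally show ?thesis by (simp add: Lf_sum Lf_single)
qed

definition mmono :: "('x \<Rightarrow> real) \<Rightarrow> ('x \<Rightarrow>\<^sub>0 nat) \<Rightarrow> real" where
  "mmono f m = (\<Prod>x\<in>Poly_Mapping.keys m. f x ^ Poly_Mapping.lookup m x)"

lemma mono_superset:
  assumes "finite A" "Poly_Mapping.keys m \<subseteq> A"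
  shows "mmono f m = (\<Prod>x\<in>A. f x ^ Poly_Mapping.lookup m x)"
  unfolding mmono_def
  by (rule prod.mono_neutral_left) (use assms in \<open>auto simp: in_keys_iff\<close>)

lemma mono_add: "mmono f (a + b) = mmono f a * mmono f b"
proof -
  let ?A = "Poly_Mapping.keys a \<union> Poly_Mapping.keys b"
  have "mmono f (a + b) = (\<Prod>x\<in>?A. f x ^ Poly_Mapping.lookup (a + b) x)"
    using keys_add[of a b] by (intro mono_superset) auto
  also have "\<dots> = (\<Prod>x\<in>?A. f x ^ Poly_Mapping.lookup a x) * (\<Prod>x\<in>?A. f x ^ Poly_Mapping.lookup b x)"
    by (simp add: lookup_add power_add prod.distrib)
  also have "\<dots> = mmono f a * mmono f b"
    by (subst (1 2) mono_superset[of ?A]) auto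
  finally show ?thesis .
qed

lemma mono_zero[simp]: "mmono f 0 = 1"
  by (simp add: mmono_def)

lemma mono_var: "mmono f (Poly_Mapping.single x 1) = f x"
  by (simp add: mmono_def)

definition ev :: "('x \<Rightarrow> real) \<Rightarrow> 'x rpoly \<Rightarrow> real" where
  "ev f = Lf (mmono f)"

definition dphi :: "('x \<Rightarrow> real) \<Rightarrow> 'x \<Rightarrow> ('x \<Rightarrow>\<^sub>0 nat) \<Rightarrow> real" where
  "dphi f x m = real (Poly_Mapping.lookup m x) * mmono f (m - Poly_Mapping.single x 1)"

definition Dv :: "('x \<Rightarrow> real) \<Rightarrow> 'x \<Rightarrow> 'x rpoly \<Rightarrow> real" where
  "Dv f x = Lf (dphi f x)"

lemma dphi_add: "dphi f x (a + b) = dphi f x a * mmono f b + mmono f a * dphi f x b"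
proof -
  let ?e = "Poly_Mapping.single x (1::nat)"
  have 1: "real (Poly_Mapping.lookup a x) * mmono f (a + b - ?e) = dphi f x a * mmono f b"
  proof (cases "Poly_Mapping.lookup a x = 0")
    case False
    have "a + b - ?e = (a - ?e) + b"
      using False by (intro poly_mapping_eqI) (auto simp: lookup_add lookup_minus lookup_single when_def)
    then show ?thesis by (simp add: dphi_def mono_add)
  qed (simp add: dphi_def)
  have 2: "real (Poly_Mapping.lookup b x) * mmono f (a + b - ?e) = mmono f a * dphi f x b"
  proof (cases "Poly_Mapping.lookup b x = 0")
    case False
    have "a + b - ?e = a + (b - ?e)"
      using False by (intro poly_mapping_eqI) (auto simp: lookup_add lookup_minus lookup_single when_def)
    then show ?thesis by (simp add: dphi_def mono_add)
  qed (simp add: dphi_def)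
  have "dphi f x (a + b) = real (Poly_Mapping.lookup a x) * mmono f (a + b - ?e)
     + real (Poly_Mapping.lookup b x) * mmono f (a + b - ?e)"
    by (simp add: dphi_def lookup_add distrib_right)
  then show ?thesis using 1 2 by simp
qed

lemma ev_add: "ev f (p + q) = ev f p + ev f q" by (simp add: ev_def Lf_add)
lemma ev_diff: "ev f (p - q) = ev f p - ev f q" by (simp add: ev_def Lf_diff)
lemma ev_sum: "ev f (\<Sum>i\<in>I. g i) = (\<Sum>i\<in>I. ev f (g i))" by (simp add: ev_def Lf_sum)
lemma ev_mult: "ev f (p * q) = ev f p * ev f q"
  unfolding ev_def Lf_mult mono_add by (simp add: Lf_def sum_product mult_ac)
lemma ev_one: "ev f 1 = 1" by (simp add: ev_def Lf_def)
lemma ev_zero: "ev f 0 = 0" by (simp add: ev_def)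
lemma ev_pvar: "ev f (pvar y) = f y" by (simp add: ev_def pvar_def Lf_single mmono_def)

lemma Dv_add: "Dv f x (p + q) = Dv f x p + Dv f x q" by (simp add: Dv_def Lf_add)
lemma Dv_diff: "Dv f x (p - q) = Dv f x p - Dv f x q" by (simp add: Dv_def Lf_diff)
lemma Dv_sum: "Dv f x (\<Sum>i\<in>I. g i) = (\<Sum>i\<in>I. Dv f x (g i))" by (simp add: Dv_def Lf_sum)
lemma Dv_mult: "Dv f x (p * q) = Dv f x p * ev f q + ev f p * Dv f x q"
proof -
  let ?p = "Poly_Mapping.lookup p" and ?q = "Poly_Mapping.lookup q"
  have "Dv f x (p * q) = (\<Sum>a\<in>Poly_Mapping.keys p. \<Sum>b\<in>Poly_Mapping.keys q.
      (?p a * dphi f x a) * (?q b * mmono f b)) + (\<Sum>a\<in>Poly_Mapping.keys p. \<Sum>b\<in>Poly_Mapping.keys q.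
      (?p a * mmono f a) * (?q b * dphi f x b))"
    unfolding Dv_def Lf_mult dphi_add by (simp add: algebra_simps sum.distrib)
  also have "\<dots> = Dv f x p * ev f q + ev f p * Dv f x q"
    unfolding sum_product[symmetric] by (simp add: Dv_def ev_def Lf_def)
  finally show ?thesis .
qed
lemma Dv_one: "Dv f x 1 = 0" by (simp add: Dv_def Lf_def dphi_def)
lemma Dv_zero: "Dv f x 0 = 0" by (simp add: Dv_def)
lemma Dv_pvar: "Dv f x (pvar y) = (if x = y then 1 else 0)"
  by (simp add: Dv_def pvar_def Lf_single dphi_def lookup_single when_def)

lemma ev_pdiff: "ev f (pdiff x p) = Dv f x p"
  unfolding pdiff_def ev_sum ev_def Lf_single Dv_def Lf_def[of "dphi f x"] dphi_def by (simp add: mult_ac Lf_sum Lf_single)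

interpretation ev_hom: comm_ring_hom "ev f"
  by unfold_locales (simp_all add: ev_add ev_mult ev_one ev_zero)

interpretation fr_hom: comm_ring_hom "(\<lambda>p. Fract p 1) :: 'a::idom \<Rightarrow> 'a fract"
  by unfold_locales (simp_all add: add_fract mult_fract One_fract_def Zero_fract_def)

lemma Fract1_eq0: "(Fract (p::'a::idom) 1 = 0) \<longleftrightarrow> p = 0"
proof -
  have "Fract p 1 = Fract 0 1 \<longleftrightarrow> p * 1 = 0 * 1" by (rule eq_fract(1)) simp_all
  then show ?thesis by (simp add: Zero_fract_def[symmetric])
qed

lemma pick_bij: assumes "finite K" shows "bij_betw (pick K) {..<card K} K"
proof -
  have inj: "inj_on (pick K) {..<card K}"
  proof (rule inj_onI)
    fix p q assume "p \<in> {..<card K}" "q \<in> {..<card K}" "pick K p = pick K q"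
    then show "p = q" using pick_mono_le[of p K q] pick_mono_le[of q K p]
      by (metis lessThan_iff linorder_neqE_nat order_less_irrefl)
  qed
  have sub: "pick K ` {..<card K} \<subseteq> K" using pick_in_set_le by auto
  have "card (pick K ` {..<card K}) = card K" using card_image[OF inj] by simp
  then have "pick K ` {..<card K} = K" using card_subset_eq[OF assms sub] by simp
  with inj show ?thesis by (simp add: bij_betw_def)
qed

lemma nth_bij: assumes "distinct xs" "R \<subseteq> set xs"
  shows "bij_betw (\<lambda>a. xs ! a) {a. a < length xs \<and> xs ! a \<in> R} R"
proof -
  have inj: "inj_on (\<lambda>a. xs ! a) {a. a < length xs \<and> xs ! a \<in> R}"
    using assms(1) by (auto simp: inj_on_def nth_eq_iff_index_eq)
  have "(\<lambda>a. xs ! a) ` {a. a < length xs \<and> xs ! a \<in> R} = R"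
  proof
    show "R \<subseteq> (\<lambda>a. xs ! a) ` {a. a < length xs \<and> xs ! a \<in> R}"
    proof
      fix x assume x: "x \<in> R"
      then obtain a where "a < length xs" "xs ! a = x" using assms(2) by (meson in_set_conv_nth subsetD)
      then show "x \<in> (\<lambda>a. xs ! a) ` {a. a < length xs \<and> xs ! a \<in> R}" using x by blast
    qed
  qed blast
  with inj show ?thesis by (simp add: bij_betw_def)
qed

lemma submatrix_map: "submatrix (map_mat f A) I J = map_mat f (submatrix A I J)"
  by (rule eq_matI) (auto simp: dim_submatrix submatrix_index pick_le)

lemma rank_from_kernel:
  fixes pt :: "'v::linorder param \<Rightarrow> real" and V :: "'v set"
  assumes fin: "finite (params D)" "finite S"
    and RP: "R \<subseteq> params D" and CS: "C \<subseteq> S" and cardRC: "card R = card C"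
    and ker: "\<And>w. (\<forall>x\<in>R. (\<Sum>c\<in>C. Dv pt x (Kmat V D (fst c) (snd c)) * w c) = 0) \<Longrightarrow> \<forall>c\<in>C. w c = 0"
  shows "card C \<le> rankJS V D S"
proof -
  define rs where "rs = sorted_list_of_set (params D)"
  define cs where "cs = sorted_list_of_set S"
  define n where "n = length rs"
  define m where "m = length cs"
  have rs: "distinct rs" "set rs = params D" "n = card (params D)" using fin by (auto simp: rs_def n_def)
  have cs: "distinct cs" "set cs = S" using fin by (auto simp: cs_def)
  define P where "P = mat n m (\<lambda>(a,b). pdiff (rs!a) (Kmat V D (fst (cs!b)) (snd (cs!b))))"
  have JS: "JS V D S = map_mat (\<lambda>p. Fract p 1) P"
    by (rule eq_matI) (auto simp: JS_def Let_def P_def rs_def cs_def n_def m_def)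
  have carr: "JS V D S \<in> carrier_mat n m" by (simp add: JS P_def)
  define I where "I = {a. a < n \<and> rs ! a \<in> R}"
  define J where "J = {b. b < m \<and> cs ! b \<in> C}"
  have bI: "bij_betw (\<lambda>a. rs ! a) I R" unfolding I_def n_def using nth_bij[OF rs(1)] RP rs(2) by auto
  have bJ: "bij_betw (\<lambda>a. cs ! a) J C" unfolding J_def m_def using nth_bij[OF cs(1)] CS cs(2) by auto
  have finI: "finite I" "finite J" by (auto simp: I_def J_def)
  have cI: "card I = card R" using bij_betw_same_card[OF bI] .
  have cJ: "card J = card C" using bij_betw_same_card[OF bJ] .
  define r where "r = card C"
  define \<rho> where "\<rho> = (\<lambda>p. rs ! pick I p)"
  define \<gamma> where "\<gamma> = (\<lambda>p. cs ! pick J p)"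
  have b\<rho>: "bij_betw \<rho> {..<r} R"
    using bij_betw_trans[OF pick_bij[OF finI(1)] bI] cI cardRC by (simp add: \<rho>_def r_def comp_def)
  have b\<gamma>: "bij_betw \<gamma> {..<r} C"
    using bij_betw_trans[OF pick_bij[OF finI(2)] bJ] cJ by (simp add: \<gamma>_def r_def comp_def)
  have Iset: "{i. i < n \<and> i \<in> I} = I" by (auto simp: I_def)
  have Jset: "{j. j < m \<and> j \<in> J} = J" by (auto simp: J_def)
  define E where "E = map_mat (ev pt) (submatrix P I J)"
  have dimP: "dim_row P = n" "dim_col P = m" by (auto simp: P_def)
  have Ecarr: "E \<in> carrier_mat r r"
  proof -
    have "submatrix P I J \<in> carrier_mat r r"
      by (rule carrier_matI) (simp_all add: dim_submatrix dimP Iset Jset cI cJ cardRC r_def)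
    then show ?thesis by (simp add: E_def)
  qed
  have Eent: "E $$ (p, q) = Dv pt (\<rho> p) (Kmat V D (fst (\<gamma> q)) (snd (\<gamma> q)))" if "p < r" "q < r" for p q
  proof -
    have pI: "p < card {i. i < dim_row P \<and> i \<in> I}" and qJ: "q < card {j. j < dim_col P \<and> j \<in> J}"
      using that by (simp_all add: dimP Iset Jset cI cJ cardRC r_def)
    have "pick I p < n" using pick_le[OF pI] dimP by simp
    moreover have "pick J q < m" using pick_le[OF qJ] dimP by simp
    ultimately show ?thesis
      using pI qJ by (simp add: E_def submatrix_index dim_submatrix P_def ev_pdiff \<rho>_def \<gamma>_def)
  qed
  have detE: "det E \<noteq> 0"
  proof
    assume "det E = 0"
    then obtain v where v: "v \<in> carrier_vec r" "v \<noteq> 0\<^sub>v r" "E *\<^sub>v v = 0\<^sub>v r"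
      using det_0_iff_vec_prod_zero_field[OF Ecarr] by auto
    define w where "w c = v $ (inv_into {..<r} \<gamma> c)" for c
    have "\<forall>x\<in>R. (\<Sum>c\<in>C. Dv pt x (Kmat V D (fst c) (snd c)) * w c) = 0"
    proof
      fix x assume x: "x \<in> R"
      define p where "p = inv_into {..<r} \<rho> x"
      have p: "p < r" "\<rho> p = x" using b\<rho> x unfolding p_def
        by (auto simp: bij_betw_def inv_into_into f_inv_into_f)
      have "0 = (E *\<^sub>v v) $ p" using v p by simp
      also have "\<dots> = row E p \<bullet> v"
        by (rule index_mult_mat_vec) (use Ecarr p in auto)
      also have "\<dots> = (\<Sum>q\<in>{0..<r}. E $$ (p, q) * v $ q)"
        unfolding scalar_prod_def using v Ecarr p by (intro sum.cong) auto
      also have "\<dots> = (\<Sum>q\<in>{..<r}. Dv pt x (Kmat V D (fst (\<gamma> q)) (snd (\<gamma> q))) * w (\<gamma> q))"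
      proof (rule sum.cong)
        fix q assume "q \<in> {..<r}"
        moreover have "inv_into {..<r} \<gamma> (\<gamma> q) = q" using b\<gamma> \<open>q \<in> {..<r}\<close>
          by (simp add: bij_betw_def inv_into_f_f)
        ultimately show "E $$ (p, q) * v $ q = Dv pt x (Kmat V D (fst (\<gamma> q)) (snd (\<gamma> q))) * w (\<gamma> q)"
          using Eent p by (simp add: w_def)
      qed auto
      also have "\<dots> = (\<Sum>c\<in>C. Dv pt x (Kmat V D (fst c) (snd c)) * w c)"
        using sum.reindex_bij_betw[OF b\<gamma>, of "\<lambda>c. Dv pt x (Kmat V D (fst c) (snd c)) * w c"] by simp
      finally show "(\<Sum>c\<in>C. Dv pt x (Kmat V D (fst c) (snd c)) * w c) = 0" by simp
    qed
    then have w0: "\<forall>c\<in>C. w c = 0" by (rule ker)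
    have "v = 0\<^sub>v r"
    proof (rule eq_vecI)
      fix q assume "q < dim_vec (0\<^sub>v r)"
      then have q: "q < r" by simp
      then have "\<gamma> q \<in> C" "inv_into {..<r} \<gamma> (\<gamma> q) = q" using b\<gamma>
        by (auto simp: bij_betw_def inv_into_f_f)
      then show "v $ q = 0\<^sub>v r $ q" using w0 q by (auto simp: w_def)
    qed (use v in auto)
    with v show False by simp
  qed
  have "det (submatrix P I J) \<noteq> 0"
    using detE by (auto simp: E_def ev_hom.hom_det)
  then have "det (submatrix (JS V D S) I J) \<noteq> 0"
    by (simp add: JS submatrix_map Fract1_eq0)
  from vec_space.rank_gt_minor[OF carr this]
  show ?thesis by (simp add: rankJS_def rs Jset cJ)
qed

lemma ev_Lam: "ev pt (Lam D a b) = (if (a,b) \<in> D then pt (Some (a,b)) else 0)"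
  by (simp add: Lam_def ev_pvar ev_zero)
lemma Dv_Lam: "Dv pt x (Lam D a b) = (if (a,b) \<in> D \<and> x = Some (a,b) then 1 else 0)"
  by (auto simp: Lam_def Dv_pvar Dv_zero)
lemma ev_IL: "ev pt (IminusLam D a b) = (if a = b then 1 else 0) - (if (a,b) \<in> D then pt (Some (a,b)) else 0)"
  by (simp add: IminusLam_def ev_diff ev_Lam ev_one ev_zero)
lemma Dv_IL: "Dv pt x (IminusLam D a b) = - (if (a,b) \<in> D \<and> x = Some (a,b) then 1 else 0)"
  by (simp add: IminusLam_def Dv_diff Dv_Lam Dv_one Dv_zero)

lemma Dv_K: "Dv pt x (Kmat V D a b) =
   (if x = None then 1 else 0) * (\<Sum>k\<in>V. ev pt (IminusLam D a k) * ev pt (IminusLam D b k))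
   + pt None * (\<Sum>k\<in>V. Dv pt x (IminusLam D a k) * ev pt (IminusLam D b k)
                       + ev pt (IminusLam D a k) * Dv pt x (IminusLam D b k))"
  by (simp add: Kmat_def Dv_mult Dv_sum ev_sum ev_mult Dv_pvar ev_pvar)

definition ptv :: "'v \<Rightarrow> 'v param \<Rightarrow> real" where
  "ptv i x = (case x of None \<Rightarrow> 1 | Some (a,b) \<Rightarrow> (if b = i then 1 else 0))"

lemma ptv_None[simp]: "ptv i None = 1" by (simp add: ptv_def)
lemma ptv_Some[simp]: "ptv i (Some (a,b)) = (if b = i then 1 else 0)" by (simp add: ptv_def)

lemma evIL_ptv: "ev (ptv i) (IminusLam D a b) = (if a = b then 1 else 0) - (if (a,b) \<in> D \<and> b = i then 1 else 0)"
  by (auto simp: ev_IL)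

lemma eN:
  assumes "simple_digraph V D" "i \<in> V" "a \<in> V" "b \<in> V" "a \<noteq> i" "b \<noteq> i"
  shows "Dv (ptv i) None (Kmat V D a b) = (if a = b then 1 else 0) + (if (a,i) \<in> D \<and> (b,i) \<in> D then 1 else 0)"
proof -
  have "Dv (ptv i) None (Kmat V D a b) = (\<Sum>k\<in>V. ((if a = k then 1 else 0) - (if (a,k) \<in> D \<and> k = i then 1 else 0))
      * ((if b = k then 1 else 0) - (if (b,k) \<in> D \<and> k = i then 1 else 0)))"
    by (simp add: Dv_K evIL_ptv Dv_IL)
  also have "\<dots> = (\<Sum>k\<in>V. (if a = k \<and> b = k then 1 else 0) + (if k = i \<and> (a,i) \<in> D \<and> (b,i) \<in> D then 1 else 0))"
    using assms(5,6) by (intro sum.cong) auto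
  also have "\<dots> = (if a = b then 1 else 0) + (if (a,i) \<in> D \<and> (b,i) \<in> D then 1 else 0)"
    using assms(1-4) by (simp add: sum.distrib simple_digraph_def) (auto simp: sum.If_cases)
  finally show ?thesis .
qed

lemma eS:
  assumes "simple_digraph V D" "(k,l) \<in> D" "a \<in> V" "b \<in> V"
  shows "Dv (ptv i) (Some (k,l)) (Kmat V D a b) =
     - (if a = k then (if b = l then 1 else 0) - (if (b,l) \<in> D \<and> l = i then 1 else 0) else 0)
     - (if b = k then (if a = l then 1 else 0) - (if (a,l) \<in> D \<and> l = i then 1 else 0) else 0)"
proof -
  have lV: "l \<in> V" using assms(1,2) by (auto simp: simple_digraph_def)
  have finV: "finite V" using assms(1) by (simp add: simple_digraph_def)
  let ?G = "- (if a = k then (if b = l then 1 else 0) - (if (b,l) \<in> D \<and> l = i then 1 else 0) else 0)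
     - (if b = k then (if a = l then 1 else 0) - (if (a,l) \<in> D \<and> l = i then 1 else 0) else 0) :: real"
  have "Dv (ptv i) (Some (k,l)) (Kmat V D a b) = (\<Sum>m\<in>V. Dv (ptv i) (Some (k,l)) (IminusLam D a m) * ev (ptv i) (IminusLam D b m)
      + ev (ptv i) (IminusLam D a m) * Dv (ptv i) (Some (k,l)) (IminusLam D b m))"
    by (simp add: Dv_K)
  also have "\<dots> = (\<Sum>m\<in>V. if m = l then ?G else 0)"
    using assms(2) by (intro sum.cong refl) (auto simp: Dv_IL evIL_ptv)
  also have "\<dots> = ?G" using assms(1) unfolding sum.delta[OF finV] by (simp only: lV if_True)
  finally show ?thesis .
qed

lemma exists_between:
  assumes "finite B" "A \<subseteq> B" "card A \<le> k" "k \<le> card B"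
  shows "\<exists>S. A \<subseteq> S \<and> S \<subseteq> B \<and> card S = k"
proof -
  have finA: "finite A" using assms(1,2) finite_subset by blast
  have "card (B - A) = card B - card A" using card_Diff_subset[OF finA assms(2)] .
  then have "k - card A \<le> card (B - A)" using assms by simp
  then obtain T where T: "T \<subseteq> B - A" "card T = k - card A"
    using obtain_subset_with_card_n by metis
  have finT: "finite T" using T(1) assms(1) finite_subset by blast
  have "card (A \<union> T) = card A + card T" using T(1) finA finT by (intro card_Un_disjoint) auto
  then show ?thesis using T assms by (intro exI[of _ "A \<union> T"]) auto
qed

lemma simple_facts:
  assumes "simple_digraph V D"
  shows "finite V" "D \<subseteq> V \<times> V" "(a,a) \<notin> D" "(a,b) \<in> D \<Longrightarrow> (b,a) \<notin> D" "finite D"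
  using assms unfolding simple_digraph_def by (auto intro: finite_subset)

definition Kav :: "'v::linorder set \<Rightarrow> 'v \<Rightarrow> ('v \<times> 'v) set" where
  "Kav V i = {(a,b). a \<in> V \<and> b \<in> V \<and> a \<le> b \<and> a \<noteq> i \<and> b \<noteq> i}"

lemma count_cols:
  fixes V :: "'v::linorder set"
  assumes "simple_digraph V D" "i \<in> V" "\<not> complete_digraph V D"
  shows "card D + 1 \<le> card (Kav V i)"
proof -
  note sf = simple_facts[OF assms(1)]
  obtain u w where uw: "u \<in> V" "w \<in> V" "u \<noteq> w" "(u,w) \<notin> D" "(w,u) \<notin> D"
    using assms(3) unfolding complete_digraph_def by blast
  define SP where "SP = {(a,b). a \<in> V \<and> b \<in> V \<and> a < b}"
  have "SP \<subseteq> V \<times> V" by (auto simp: SP_def)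
  then have finSP: "finite SP" using sf(1) finite_subset by blast
  have "Kav V i \<subseteq> V \<times> V" by (auto simp: Kav_def)
  then have finK: "finite (Kav V i)" using sf(1) finite_subset by blast
  define h where "h = (\<lambda>(a,b). if a = i then (b,b) else if b = i then (a,a) else (a::'v,b::'v))"
  have "inj_on h SP" unfolding inj_on_def h_def SP_def by auto
  moreover have "h ` SP \<subseteq> Kav V i" unfolding h_def SP_def Kav_def using assms(2) by (auto split: if_splits)
  ultimately have c1: "card SP \<le> card (Kav V i)" using card_inj_on_le finK by blast
  define g where "g = (\<lambda>(k,l). (min k l, max k (l::'v)))"
  have "inj_on g D"
  proof (rule inj_onI)
    fix x y assume "x \<in> D" "y \<in> D" "g x = g y"
    then show "x = y" using sf(4)[of "fst x" "snd x"] sf(3)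
      by (cases x; cases y) (auto simp: g_def min_def max_def split: if_splits)
  qed
  moreover have "g ` D \<subseteq> SP - {g (u,w)}"
  proof
    fix y assume "y \<in> g ` D"
    then obtain k l where kl: "(k,l) \<in> D" "y = g (k,l)" by auto
    have "k \<in> V" "l \<in> V" "k \<noteq> l" using kl sf(2,3) by auto
    moreover have "g (k,l) \<noteq> g (u,w)" using kl uw by (auto simp: g_def min_def max_def split: if_splits)
    ultimately show "y \<in> SP - {g (u,w)}" using kl by (auto simp: g_def SP_def min_def max_def)
  qed
  ultimately have "card D \<le> card (SP - {g (u,w)})" using card_inj_on_le finSP by blast
  moreover have "g (u,w) \<in> SP" using uw by (auto simp: g_def SP_def min_def max_def)
  ultimately have "card D + 1 \<le> card SP" using finSP
    by (metis card_Diff1_less le_simps(3) Suc_eq_plus1 order_le_less_trans)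
  then show ?thesis using c1 by simp
qed

definition colf :: "'v::linorder \<Rightarrow> 'v \<times> 'v \<Rightarrow> 'v \<times> 'v" where
  "colf i e = (if snd e = i then (fst e, fst e) else (min (fst e) (snd e), max (fst e) (snd e)))"

definition Dn :: "('v \<times> 'v) set \<Rightarrow> 'v \<Rightarrow> ('v \<times> 'v) set" where
  "Dn D i = {e \<in> D. fst e \<noteq> i}"

lemma colf_inj:
  assumes "simple_digraph V D"
  shows "inj_on (colf i) (Dn D i)"
proof (rule inj_onI)
  note sf = simple_facts[OF assms]
  fix x y assume xy: "x \<in> Dn D i" "y \<in> Dn D i" "colf i x = colf i y"
  obtain k l k' l' where e: "x = (k,l)" "y = (k',l')" by (cases x, cases y) auto
  have D: "(k,l) \<in> D" "(k',l') \<in> D" using xy e by (auto simp: Dn_def)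
  then have "k \<noteq> l" "k' \<noteq> l'" using sf(3) by auto
  then show "x = y" using xy(3) e sf(4)[OF D(1)] D(2)
    by (auto simp: colf_def min_def max_def split: if_splits)
qed

lemma core:
  fixes V :: "'v::linorder set" and c0 :: "'v \<times> 'v"
  assumes simple: "simple_digraph V D" and iV: "i \<in> V" and nc: "\<not> complete_digraph V D"
    and c0: "fst c0 \<in> V" "snd c0 \<in> V" "fst c0 \<noteq> i" "snd c0 \<noteq> i" "fst c0 \<le> snd c0"
       "c0 \<notin> colf i ` Dn D i"
    and ker: "\<And>w. (\<forall>x\<in>Some ` Dn D i \<union> {None}. (\<Sum>c\<in>colf i ` Dn D i \<union> {c0}.
        Dv (ptv i) x (Kmat V D (fst c) (snd c)) * w c) = 0) \<Longrightarrow> \<forall>c\<in>colf i ` Dn D i \<union> {c0}. w c = 0"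
  shows "\<exists>S. S \<subseteq> Kcols V \<and> card S = card D + 1
            \<and> (\<forall>(a, b)\<in>S. a \<noteq> i \<and> b \<noteq> i)
            \<and> rankJS V D S \<ge> card D - card (children D i) + 1"
proof -
  note sf = simple_facts[OF simple]
  define R where "R = Some ` Dn D i \<union> {None}"
  define C where "C = colf i ` Dn D i \<union> {c0}"
  have finDn: "finite (Dn D i)" using sf(5) by (simp add: Dn_def)
  have cardC: "card C = card (Dn D i) + 1"
    unfolding C_def using c0(6) finDn card_image[OF colf_inj[OF simple]] by simp
  have cardR: "card R = card (Dn D i) + 1"
    unfolding R_def using finDn card_image[of Some "Dn D i"] by simp
  have RP: "R \<subseteq> params D" by (auto simp: R_def params_def Dn_def)
  have CK: "C \<subseteq> Kav V i"
  proof
    fix c assume "c \<in> C"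
    then show "c \<in> Kav V i"
    proof (cases "c = c0")
      case False
      with \<open>c \<in> C\<close> obtain k l where "(k,l) \<in> D" "k \<noteq> i" "c = colf i (k,l)"
        by (auto simp: C_def Dn_def)
      then show ?thesis using sf(2) by (auto simp: colf_def Kav_def min_def max_def)
    qed (use c0 in \<open>auto simp: Kav_def\<close>)
  qed
  have finK: "finite (Kav V i)"
  proof -
    have "Kav V i \<subseteq> V \<times> V" by (auto simp: Kav_def)
    then show ?thesis using sf(1) finite_subset by blast
  qed
  have "card (Dn D i) \<le> card D" using sf(5) by (intro card_mono) (auto simp: Dn_def)
  then have "card C \<le> card D + 1" using cardC by simp
  then obtain S where S: "C \<subseteq> S" "S \<subseteq> Kav V i" "card S = card D + 1"
    using exists_between[OF finK CK _ count_cols[OF simple iV nc]] by blast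
  have finS: "finite S" using S(2) finK finite_subset by blast
  have finP: "finite (params D)" using sf(5) by (simp add: params_def)
  have ker': "\<And>w. (\<forall>x\<in>R. (\<Sum>c\<in>C. Dv (ptv i) x (Kmat V D (fst c) (snd c)) * w c) = 0) \<Longrightarrow> \<forall>c\<in>C. w c = 0"
    using ker unfolding R_def C_def by blast
  have rk: "card C \<le> rankJS V D S"
    by (rule rank_from_kernel[OF finP finS RP S(1) _ ker']) (simp add: cardR cardC)
  have "D \<subseteq> Dn D i \<union> Pair i ` children D i" by (auto simp: Dn_def children_def)
  then have "card D \<le> card (Dn D i \<union> Pair i ` children D i)"
    using finDn sf(5) by (intro card_mono) (auto simp: children_def intro: finite_subset)
  also have "\<dots> \<le> card (Dn D i) + card (Pair i ` children D i)" by (rule card_Un_le)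
  also have "\<dots> \<le> card (Dn D i) + card (children D i)" 
    by (simp add: card_image inj_on_def)
  finally have "card D - card (children D i) + 1 \<le> card C" using cardC by simp
  then show ?thesis using S rk
    by (intro exI[of _ S]) (auto simp: Kav_def Kcols_def)
qed

lemma L1:
  fixes V :: "'v::linorder set"
  assumes "simple_digraph V D" "(k,l) \<in> D" "l \<noteq> i" "a \<in> V" "b \<in> V" "a \<le> b"
  shows "Dv (ptv i) (Some (k,l)) (Kmat V D a b) = (if (a,b) = (min k l, max k l) then -1 else 0)"
proof -
  have "k \<noteq> l" using simple_facts(3)[OF assms(1)] assms(2) by auto
  then show ?thesis using eS[OF assms(1,2,4,5), of i] assms(3,6)
    by (auto simp: min_def max_def)
qed

lemma L2:
  assumes "simple_digraph V D" "(k,i) \<in> D" "a \<in> V" "b \<in> V" "a \<noteq> i" "b \<noteq> i"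
  shows "Dv (ptv i) (Some (k,i)) (Kmat V D a b) =
    (if a = k \<and> (b,i) \<in> D then 1 else 0) + (if b = k \<and> (a,i) \<in> D then 1 else 0)"
  using eS[OF assms(1,2,3,4), of i] assms(5,6) by auto

lemma Cmem:
  assumes "simple_digraph V D" "c \<in> colf i ` Dn D i \<union> {c0}"
    "fst c0 \<in> V" "snd c0 \<in> V" "fst c0 \<noteq> i" "snd c0 \<noteq> i" "fst c0 \<le> snd c0"
  shows "fst c \<in> V" "snd c \<in> V" "fst c \<noteq> i" "snd c \<noteq> i" "fst c \<le> snd c"
    and "c \<noteq> c0 \<Longrightarrow> fst c \<noteq> snd c \<Longrightarrow> \<exists>k l. (k,l) \<in> D \<and> k \<noteq> i \<and> l \<noteq> i \<and> c = (min k l, max k l)"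
    and "c \<noteq> c0 \<Longrightarrow> fst c = snd c \<Longrightarrow> (fst c, i) \<in> D"
proof -
  note sf = simple_facts[OF assms(1)]
  have "fst c \<in> V \<and> snd c \<in> V \<and> fst c \<noteq> i \<and> snd c \<noteq> i \<and> fst c \<le> snd c
     \<and> (c \<noteq> c0 \<longrightarrow> fst c \<noteq> snd c \<longrightarrow> (\<exists>k l. (k,l) \<in> D \<and> k \<noteq> i \<and> l \<noteq> i \<and> c = (min k l, max k l)))
     \<and> (c \<noteq> c0 \<longrightarrow> fst c = snd c \<longrightarrow> (fst c, i) \<in> D)"
  proof (cases "c = c0")
    case False
    with assms(2) obtain k l where kl: "(k,l) \<in> D" "k \<noteq> i" "c = colf i (k,l)"
      by (auto simp: Dn_def)
    then have "k \<in> V" "l \<in> V" "k \<noteq> l" using sf(2,3) by auto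
    then show ?thesis using kl False by (auto simp: colf_def min_def max_def)
  qed (use assms in auto)
  then show "fst c \<in> V" "snd c \<in> V" "fst c \<noteq> i" "snd c \<noteq> i" "fst c \<le> snd c"
    and "c \<noteq> c0 \<Longrightarrow> fst c \<noteq> snd c \<Longrightarrow> \<exists>k l. (k,l) \<in> D \<and> k \<noteq> i \<and> l \<noteq> i \<and> c = (min k l, max k l)"
    and "c \<noteq> c0 \<Longrightarrow> fst c = snd c \<Longrightarrow> (fst c, i) \<in> D" by blast+
qed

lemma step1:
  assumes simple: "simple_digraph V D" and c0: "fst c0 \<in> V" "snd c0 \<in> V" "fst c0 \<noteq> i" "snd c0 \<noteq> i" "fst c0 \<le> snd c0"
    and kl: "(k,l) \<in> D" "k \<noteq> i" "l \<noteq> i"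
    and hyp: "(\<Sum>c\<in>colf i ` Dn D i \<union> {c0}. Dv (ptv i) (Some (k,l)) (Kmat V D (fst c) (snd c)) * w c) = 0"
  shows "w (min k l, max k l) = 0"
proof -
  let ?C = "colf i ` Dn D i \<union> {c0}"
  have fin: "finite ?C" using simple_facts(5)[OF simple] by (simp add: Dn_def)
  have mem: "(min k l, max k l) \<in> ?C"
  proof -
    have "colf i (k,l) = (min k l, max k l)" using kl by (simp add: colf_def)
    moreover have "(k,l) \<in> Dn D i" using kl by (simp add: Dn_def)
    ultimately show ?thesis by (metis UnI1 image_eqI)
  qed
  have "(\<Sum>c\<in>?C. Dv (ptv i) (Some (k,l)) (Kmat V D (fst c) (snd c)) * w c)
      = (\<Sum>c\<in>?C. if c = (min k l, max k l) then - w c else 0)"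
  proof (rule sum.cong[OF refl])
    fix c assume c: "c \<in> ?C"
    note cm = Cmem[OF simple c c0]
    show "Dv (ptv i) (Some (k,l)) (Kmat V D (fst c) (snd c)) * w c = (if c = (min k l, max k l) then - w c else 0)"
      using L1[OF simple kl(1) kl(3) cm(1,2,5)] by (cases c) auto
  qed
  also have "\<dots> = - w (min k l, max k l)" using mem fin by (simp add: sum.delta')
  finally show ?thesis using hyp by simp
qed
lemma kerA:
  fixes V :: "'v::linorder set"
  assumes simple: "simple_digraph V D" and iV: "i \<in> V" and a0: "a0 \<in> V" "a0 \<noteq> i" "(a0, i) \<notin> D"
    and hyp: "\<forall>x\<in>Some ` Dn D i \<union> {None}. (\<Sum>c\<in>colf i ` Dn D i \<union> {(a0,a0)}.
        Dv (ptv i) x (Kmat V D (fst c) (snd c)) * w c) = 0"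
  shows "\<forall>c\<in>colf i ` Dn D i \<union> {(a0,a0)}. w c = 0"
proof -
  define c0 where "c0 = (a0, a0)"
  let ?C = "colf i ` Dn D i \<union> {c0}"
  have c0: "fst c0 \<in> V" "snd c0 \<in> V" "fst c0 \<noteq> i" "snd c0 \<noteq> i" "fst c0 \<le> snd c0"
    using a0 by (auto simp: c0_def)
  have fin: "finite ?C" using simple_facts(5)[OF simple] by (simp add: Dn_def)
  have hyp': "\<And>x. x \<in> Some ` Dn D i \<union> {None} \<Longrightarrow> (\<Sum>c\<in>?C. Dv (ptv i) x (Kmat V D (fst c) (snd c)) * w c) = 0"
    using hyp unfolding c0_def by blast
  have off: "w (min k l, max k l) = 0" if "(k,l) \<in> D" "k \<noteq> i" "l \<noteq> i" for k l
    using step1[OF simple c0 that hyp'] that by (auto simp: Dn_def)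
  have offC: "w c = 0" if cC: "c \<in> ?C" and cd: "fst c \<noteq> snd c" for c
  proof -
    have "c \<noteq> c0" using cd by (auto simp: c0_def)
    then obtain k l where "(k,l) \<in> D" "k \<noteq> i" "l \<noteq> i" "c = (min k l, max k l)"
      using Cmem(6)[OF simple cC c0] cd by blast
    then show ?thesis using off by simp
  qed
  have diag: "w (k,k) = 0" if k: "(k,i) \<in> D" "k \<noteq> i" for k
  proof -
    have mem: "(k,k) \<in> ?C"
    proof -
      have "colf i (k,i) = (k,k)" by (simp add: colf_def)
      moreover have "(k,i) \<in> Dn D i" using k by (simp add: Dn_def)
      ultimately show ?thesis by (metis UnI1 image_eqI)
    qed
    have "0 = (\<Sum>c\<in>?C. Dv (ptv i) (Some (k,i)) (Kmat V D (fst c) (snd c)) * w c)"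
      using hyp'[of "Some (k,i)"] k by (simp add: Dn_def)
    also have "\<dots> = (\<Sum>c\<in>?C. if c = (k,k) then 2 * w c else 0)"
    proof (rule sum.cong[OF refl])
      fix c assume c: "c \<in> ?C"
      note cm = Cmem[OF simple c c0]
      show "Dv (ptv i) (Some (k,i)) (Kmat V D (fst c) (snd c)) * w c = (if c = (k,k) then 2 * w c else 0)"
      proof (cases "fst c = snd c")
        case True
        then show ?thesis using L2[OF simple k(1) cm(1-4)] k(1) by (cases c) auto
      next
        case False
        then show ?thesis using offC[OF c] by auto
      qed
    qed
    also have "\<dots> = 2 * w (k,k)" using mem fin by (simp add: sum.delta')
    finally show ?thesis by simp
  qed
  have w0: "w c0 = 0"
  proof -
    have "0 = (\<Sum>c\<in>?C. Dv (ptv i) None (Kmat V D (fst c) (snd c)) * w c)"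
      using hyp'[of None] by simp
    also have "\<dots> = (\<Sum>c\<in>?C. if c = c0 then w c else 0)"
    proof (rule sum.cong[OF refl])
      fix c assume c: "c \<in> ?C"
      note cm = Cmem[OF simple c c0]
      show "Dv (ptv i) None (Kmat V D (fst c) (snd c)) * w c = (if c = c0 then w c else 0)"
      proof (cases "c = c0")
        case True
        then show ?thesis using eN[OF simple iV cm(1-4)] a0 simple_facts(2)[OF simple] by (auto simp: c0_def)
      next
        case False
        show ?thesis
        proof (cases "fst c = snd c")
          case True
          then have "(fst c, i) \<in> D" using Cmem(7)[OF simple c c0] False by blast
          then have "w c = 0" using diag[of "fst c"] True cm(3) by (cases c) auto
          then show ?thesis using False by simp
        next
          case F2: False
          then show ?thesis using offC[OF c] False by auto
        qed
      qed
    qed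
    also have "\<dots> = w c0" using fin by (simp add: sum.delta')
    finally show ?thesis by simp
  qed
  show ?thesis
  proof
    fix c assume c: "c \<in> colf i ` Dn D i \<union> {(a0,a0)}"
    then have c': "c \<in> ?C" by (simp add: c0_def)
    show "w c = 0"
    proof (cases "c = c0")
      case True then show ?thesis using w0 by simp
    next
      case False
      show ?thesis
      proof (cases "fst c = snd c")
        case True
        then have "(fst c, i) \<in> D" using Cmem(7)[OF simple c' c0] False by blast
        then show ?thesis using diag[of "fst c"] True Cmem(3)[OF simple c' c0] by (cases c) auto
      qed (use offC[OF c'] in auto)
    qed
  qed
qed
lemma kerB:
  fixes V :: "'v::linorder set"
  assumes simple: "simple_digraph V D" and iV: "i \<in> V"
    and allp: "\<forall>a\<in>V. a \<noteq> i \<longrightarrow> (a, i) \<in> D"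
    and pq: "p \<in> V" "q \<in> V" "p \<noteq> i" "q \<noteq> i" "p < q" "(p,q) \<notin> D" "(q,p) \<notin> D"
    and hyp: "\<forall>x\<in>Some ` Dn D i \<union> {None}. (\<Sum>c\<in>colf i ` Dn D i \<union> {(p,q)}.
        Dv (ptv i) x (Kmat V D (fst c) (snd c)) * w c) = 0"
  shows "\<forall>c\<in>colf i ` Dn D i \<union> {(p,q)}. w c = 0"
proof -
  define c0 where "c0 = (p, q)"
  let ?C = "colf i ` Dn D i \<union> {c0}"
  have c0: "fst c0 \<in> V" "snd c0 \<in> V" "fst c0 \<noteq> i" "snd c0 \<noteq> i" "fst c0 \<le> snd c0"
    using pq by (auto simp: c0_def)
  have fin: "finite ?C" using simple_facts(5)[OF simple] by (simp add: Dn_def)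
  have hyp': "\<And>x. x \<in> Some ` Dn D i \<union> {None} \<Longrightarrow> (\<Sum>c\<in>?C. Dv (ptv i) x (Kmat V D (fst c) (snd c)) * w c) = 0"
    using hyp unfolding c0_def by blast
  have off: "w (min k l, max k l) = 0" if "(k,l) \<in> D" "k \<noteq> i" "l \<noteq> i" for k l
    using step1[OF simple c0 that hyp'] that by (auto simp: Dn_def)
  have offC: "w c = 0" if cC: "c \<in> ?C" and cd: "fst c \<noteq> snd c" and cn: "c \<noteq> c0" for c
  proof -
    obtain k l where "(k,l) \<in> D" "k \<noteq> i" "l \<noteq> i" "c = (min k l, max k l)"
      using Cmem(6)[OF simple cC c0] cd cn by blast
    then show ?thesis using off by simp
  qed
  have memd: "(k,k) \<in> ?C" if k: "k \<in> V" "k \<noteq> i" for k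
  proof -
    have "colf i (k,i) = (k,k)" by (simp add: colf_def)
    moreover have "(k,i) \<in> Dn D i" using k allp by (simp add: Dn_def)
    ultimately show ?thesis by (metis UnI1 image_eqI)
  qed
  have c0C: "c0 \<in> ?C" by simp
  have pi: "(p,i) \<in> D" "(q,i) \<in> D" using allp pq by auto
  have row: "2 * w (k,k) + ((if p = k then 1 else 0) + (if q = k then 1 else 0)) * w c0 = 0"
    if k: "k \<in> V" "k \<noteq> i" for k
  proof -
    have ki: "(k,i) \<in> D" using allp k by auto
    have "0 = (\<Sum>c\<in>?C. Dv (ptv i) (Some (k,i)) (Kmat V D (fst c) (snd c)) * w c)"
      using hyp'[of "Some (k,i)"] k ki by (simp add: Dn_def)
    also have "\<dots> = (\<Sum>c\<in>?C. (if c = (k,k) then 2 * w c else 0)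
        + (if c = c0 then ((if p = k then 1 else 0) + (if q = k then 1 else 0)) * w c else 0))"
    proof (rule sum.cong[OF refl])
      fix c assume c: "c \<in> ?C"
      note cm = Cmem[OF simple c c0]
      have L: "Dv (ptv i) (Some (k,i)) (Kmat V D (fst c) (snd c)) =
          (if fst c = k \<and> (snd c,i) \<in> D then 1 else 0) + (if snd c = k \<and> (fst c,i) \<in> D then 1 else 0)"
        by (rule L2[OF simple ki cm(1-4)])
      show "Dv (ptv i) (Some (k,i)) (Kmat V D (fst c) (snd c)) * w c =
          (if c = (k,k) then 2 * w c else 0)
        + (if c = c0 then ((if p = k then 1 else 0) + (if q = k then 1 else 0)) * w c else 0)"
      proof (cases "c = c0")
        case True
        then show ?thesis using L pi pq(5) by (auto simp: c0_def)
      next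
        case False
        show ?thesis
        proof (cases "fst c = snd c")
          case True
          then show ?thesis using L False ki by (cases c) auto
        next
          case F2: False
          then show ?thesis using offC[OF c F2 False] False by auto
        qed
      qed
    qed
    also have "\<dots> = 2 * w (k,k) + ((if p = k then 1 else 0) + (if q = k then 1 else 0)) * w c0"
      using memd[OF k] c0C fin by (simp add: sum.distrib sum.delta')
    finally show ?thesis by simp
  qed
  have dz: "w (k,k) = 0" if "k \<in> V" "k \<noteq> i" "k \<noteq> p" "k \<noteq> q" for k
    using row[OF that(1,2)] that(3,4) by auto
  have pqne: "p \<noteq> q" "q \<noteq> p" using pq(5) by auto
  have rp: "2 * w (p,p) + w c0 = 0" using row[OF pq(1,3)] pqne by simp
  have rq: "2 * w (q,q) + w c0 = 0" using row[OF pq(2,4)] pqne by simp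
  have rN: "w c0 + 2 * w (p,p) + 2 * w (q,q) = 0"
  proof -
    have "0 = (\<Sum>c\<in>?C. Dv (ptv i) None (Kmat V D (fst c) (snd c)) * w c)"
      using hyp'[of None] by simp
    also have "\<dots> = (\<Sum>c\<in>?C. (if c = c0 then w c else 0) + (if c = (p,p) then 2 * w c else 0)
        + (if c = (q,q) then 2 * w c else 0))"
    proof (rule sum.cong[OF refl])
      fix c assume c: "c \<in> ?C"
      note cm = Cmem[OF simple c c0]
      have N: "Dv (ptv i) None (Kmat V D (fst c) (snd c)) =
          (if fst c = snd c then 1 else 0) + (if (fst c, i) \<in> D \<and> (snd c, i) \<in> D then 1 else 0)"
        by (rule eN[OF simple iV cm(1-4)])
      have P: "(fst c, i) \<in> D" "(snd c, i) \<in> D" using allp cm(1-4) by auto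
      show "Dv (ptv i) None (Kmat V D (fst c) (snd c)) * w c =
          (if c = c0 then w c else 0) + (if c = (p,p) then 2 * w c else 0)
        + (if c = (q,q) then 2 * w c else 0)"
      proof (cases "c = c0")
        case True
        then show ?thesis using N P pq(5) by (auto simp: c0_def)
      next
        case False
        show ?thesis
        proof (cases "fst c = snd c")
          case True
          then obtain a where a: "c = (a,a)" by (cases c) auto
          have "a \<in> V" "a \<noteq> i" using cm(1,3) a by auto
          then show ?thesis using N P True False a dz[of a] pqne by auto
        next
          case F2: False
          then show ?thesis using offC[OF c F2 False] False by auto
        qed
      qed
    qed
    also have "\<dots> = w c0 + 2 * w (p,p) + 2 * w (q,q)"
      using memd[OF pq(1,3)] memd[OF pq(2,4)] c0C fin by (simp add: sum.distrib sum.delta')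
    finally show ?thesis by simp
  qed
  have w0: "w c0 = 0" and wp: "w (p,p) = 0" and wq: "w (q,q) = 0" using rp rq rN by linarith+
  show ?thesis
  proof
    fix c assume c: "c \<in> colf i ` Dn D i \<union> {(p,q)}"
    then have c': "c \<in> ?C" by (simp add: c0_def)
    note cm = Cmem[OF simple c' c0]
    show "w c = 0"
    proof (cases "c = c0")
      case True then show ?thesis using w0 by simp
    next
      case False
      show ?thesis
      proof (cases "fst c = snd c")
        case True
        then obtain a where a: "c = (a,a)" by (cases c) auto
        have "a \<in> V" "a \<noteq> i" using cm(1,3) a by auto
        then show ?thesis using a dz[of a] wp wq by (cases "a = p"; cases "a = q") auto
      qed (use offC[OF c'] False in auto)
    qed
  qed
qed
theorem lemma4p2:
  fixes V :: "('v::linorder) set" and D :: "('v \<times> 'v) set"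
  assumes "simple_digraph V D"
    and "\<not> complete_digraph V D"
  shows "\<forall>i\<in>V. \<exists>S. S \<subseteq> Kcols V \<and> card S = card D + 1
            \<and> (\<forall>(a, b)\<in>S. a \<noteq> i \<and> b \<noteq> i)
            \<and> rankJS V D S \<ge> card D - card (children D i) + 1"
proof
  fix i assume iV: "i \<in> V"
  note simple = assms(1) and nc = assms(2)
  note sf = simple_facts[OF simple]
  obtain u w where uw: "u \<in> V" "w \<in> V" "u \<noteq> w" "(u,w) \<notin> D" "(w,u) \<notin> D"
    using nc unfolding complete_digraph_def by blast
  show "\<exists>S. S \<subseteq> Kcols V \<and> card S = card D + 1
            \<and> (\<forall>(a, b)\<in>S. a \<noteq> i \<and> b \<noteq> i)
            \<and> rankJS V D S \<ge> card D - card (children D i) + 1"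
  proof (cases "\<exists>a0\<in>V. a0 \<noteq> i \<and> (a0, i) \<notin> D")
    case True
    then obtain a0 where a0: "a0 \<in> V" "a0 \<noteq> i" "(a0, i) \<notin> D" by blast
    have nim: "(a0, a0) \<notin> colf i ` Dn D i"
    proof
      assume "(a0, a0) \<in> colf i ` Dn D i"
      then obtain k l where kl: "(k,l) \<in> D" "k \<noteq> i" "(a0,a0) = colf i (k,l)" by (auto simp: Dn_def)
      have "k \<noteq> l" using kl(1) sf(3) by auto
      then show False using kl a0 by (auto simp: colf_def min_def max_def split: if_splits)
    qed
    show ?thesis
      using core[OF simple iV nc _ _ _ _ _ nim kerA[OF simple iV a0]] a0 by simp
  next
    case False
    then have allp: "\<forall>a\<in>V. a \<noteq> i \<longrightarrow> (a, i) \<in> D" by blast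
    have ui: "u \<noteq> i" "w \<noteq> i" using allp uw by auto
    define p where "p = min u w"
    define q where "q = max u w"
    have pq: "p \<in> V" "q \<in> V" "p \<noteq> i" "q \<noteq> i" "p < q" "(p,q) \<notin> D" "(q,p) \<notin> D"
      using uw ui by (auto simp: p_def q_def min_def max_def)
    have nim: "(p, q) \<notin> colf i ` Dn D i"
    proof
      assume "(p, q) \<in> colf i ` Dn D i"
      then obtain k l where kl: "(k,l) \<in> D" "k \<noteq> i" "(p,q) = colf i (k,l)" by (auto simp: Dn_def)
      show False
      proof (cases "l = i")
        case True then show False using kl pq(5) by (simp add: colf_def)
      next
        case False
        then have "(p,q) = (min k l, max k l)" using kl by (simp add: colf_def)
        then have "(k,l) = (p,q) \<or> (k,l) = (q,p)" by (auto simp: min_def max_def split: if_splits)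
        then show False using kl(1) pq(6,7) by auto
      qed
    qed
    show ?thesis
      using core[OF simple iV nc _ _ _ _ _ nim kerB[OF simple iV allp pq]] pq by simp
  qed
qed

end
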